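(* Let $G$ be a vigorous approximately full subgroup of $\operatorname{Homeo}(\mathfrak{C})$. Then $G$ is strongly approximately full. Consequently, for vigorous subgroups of $\operatorname{Homeo}(\mathfrak{C})$, being approximately full and being strongly approximately full are equivalent.
   Context: $\mathfrak{C}$ denotes a Cantor space (a space homeomorphic to $\{0,1\}^\omega$). Groups of homeomorphisms act on the right. $K_{\mathfrak{C}}$ denotes the set of non-empty proper clopen subsets of $\mathfrak{C}$. For $\gamma\in\operatorname{Homeo}(\mathfrak{C})$, $\operatorname{supp}(\gamma)=\{p\in\mathfrak{C}: p\gamma\neq p\}$. A subset $S\subseteq \operatorname{Homeo}(\mathfrak{C})$ is vigorous if for all clopen $A,B,C\subseteq\mathfrak{C}$ with $B,C$ non-empty proper subsets of $A$ there is $\gamma\in S$ with $\operatorname{supp}(\gamma)\subseteq A$ and $B\gamma\subseteq C$. $G$ is approximately full if whenever $\Gamma\subseteq G$ is finite, $\{D_\gamma\}_{\gamma\in\Gamma}$ is a partition of $\mathfrak{C}$ into clopen sets such that $\{D_\gamma\gamma\}_{\gamma\in\Gamma}$ is also a partition of $\mathfrak{C}$, and $\delta\in\Gamma$, there exists $\chi\in G$ with $\chi|_{D_\gamma}=\gamma|_{D_\gamma}$ for every $\gamma\in\Gamma\setminus\{\delta\}$. $G$ is strongly approximately full if for all $D,R\in K_{\mathfrak{C}}$, every finite $\Gamma\subseteq G$ and every partition $\{D_\gamma\}_{\gamma\in\Gamma}$ of $D$ into clopen sets such that $\{D_\gamma\gamma\}_{\gamma\in\Gamma}$ is a partition of $R$,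 there exists $\chi\in G$ with $\chi|_{D_\gamma}=\gamma|_{D_\gamma}$ for every $\gamma\in\Gamma$. *)

theory Defs
  imports "HOL-Analysis.Analysis"
begin

definition cantor_top :: "(nat \<Rightarrow> bool) topology" where
  "cantor_top = product_topology (\<lambda>_. discrete_topology (UNIV :: bool set)) (UNIV :: nat set)"

definition cantor_space :: "'a topology \<Rightarrow> bool" where
  "cantor_space X \<longleftrightarrow> X homeomorphic_space cantor_top"

definition Homeo :: "'a topology \<Rightarrow> ('a \<Rightarrow> 'a) set" where
  "Homeo X = {f. homeomorphic_map X X f \<and> (\<forall>x. x \<notin> topspace X \<longrightarrow> f x = x)}"

definition homeo_subgroup :: "'a topology \<Rightarrow> ('a \<Rightarrow> 'a) set \<Rightarrow> bool" where
  "homeo_subgroup X G \<longleftrightarrow> G \<subseteq> Homeo X \<and> id \<in> G \<and>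
     (\<forall>f\<in>G. \<forall>g\<in>G. f \<circ> g \<in> G) \<and>
     (\<forall>f\<in>G. \<exists>g\<in>G. f \<circ> g = id \<and> g \<circ> f = id)"

definition clopen :: "'a topology \<Rightarrow> 'a set \<Rightarrow> bool" where
  "clopen X A \<longleftrightarrow> openin X A \<and> closedin X A"

definition Kset :: "'a topology \<Rightarrow> 'a set set" where
  "Kset X = {A. clopen X A \<and> A \<noteq> {} \<and> A \<subset> topspace X}"

definition supp :: "'a topology \<Rightarrow> ('a \<Rightarrow> 'a) \<Rightarrow> 'a set" where
  "supp X g = {p \<in> topspace X. g p \<noteq> p}"

text \<open>Right action: B\<gamma> is the image of B under \<gamma>.\<close>
definition vigorous :: "'a topology \<Rightarrow> ('a \<Rightarrow> 'a) set \<Rightarrow> bool" where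
  "vigorous X S \<longleftrightarrow>
     (\<forall>A B C. clopen X A \<and> clopen X B \<and> clopen X C \<and>
        B \<noteq> {} \<and> C \<noteq> {} \<and> B \<subset> A \<and> C \<subset> A \<longrightarrow>
        (\<exists>g\<in>S. supp X g \<subseteq> A \<and> g ` B \<subseteq> C))"

definition clopen_partition :: "'a topology \<Rightarrow> 'i set \<Rightarrow> ('i \<Rightarrow> 'a set) \<Rightarrow> 'a set \<Rightarrow> bool" where
  "clopen_partition X I P U \<longleftrightarrow>
     (\<forall>i\<in>I. clopen X (P i) \<and> P i \<noteq> {}) \<and>
     (\<forall>i\<in>I. \<forall>j\<in>I. i \<noteq> j \<longrightarrow> P i \<inter> P j = {}) \<and>
     (\<Union>i\<in>I. P i) = U"

definition set_partition :: "'i set \<Rightarrow> ('i \<Rightarrow> 'a set) \<Rightarrow> 'a set \<Rightarrow> bool" where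
  "set_partition I P U \<longleftrightarrow>
     (\<forall>i\<in>I. P i \<noteq> {}) \<and>
     (\<forall>i\<in>I. \<forall>j\<in>I. i \<noteq> j \<longrightarrow> P i \<inter> P j = {}) \<and>
     (\<Union>i\<in>I. P i) = U"

definition approx_full :: "'a topology \<Rightarrow> ('a \<Rightarrow> 'a) set \<Rightarrow> bool" where
  "approx_full X G \<longleftrightarrow>
     (\<forall>\<Gamma> D \<delta>. \<Gamma> \<subseteq> G \<and> finite \<Gamma> \<and>
        clopen_partition X \<Gamma> D (topspace X) \<and>
        set_partition \<Gamma> (\<lambda>g. g ` D g) (topspace X) \<and> \<delta> \<in> \<Gamma> \<longrightarrow>
        (\<exists>k\<in>G. \<forall>g\<in>\<Gamma> - {\<delta>}. \<forall>x\<in>D g. k x = g x))"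

definition strongly_approx_full :: "'a topology \<Rightarrow> ('a \<Rightarrow> 'a) set \<Rightarrow> bool" where
  "strongly_approx_full X G \<longleftrightarrow>
     (\<forall>Dom R \<Gamma> D. Dom \<in> Kset X \<and> R \<in> Kset X \<and> \<Gamma> \<subseteq> G \<and> finite \<Gamma> \<and>
        clopen_partition X \<Gamma> D Dom \<and>
        set_partition \<Gamma> (\<lambda>g. g ` D g) R \<longrightarrow>
        (\<exists>k\<in>G. \<forall>g\<in>\<Gamma>. \<forall>x\<in>D g. k x = g x))"

end

theory Submission
  imports Defs
begin


lemma clopen_subset: "clopen X A \<Longrightarrow> A \<subseteq> topspace X"
  by (simp add: clopen_def openin_subset)

lemma clopen_Un: "clopen X A \<Longrightarrow> clopen X B \<Longrightarrow> clopen X (A \<union> B)"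
  by (auto simp: clopen_def)
lemma clopen_Int: "clopen X A \<Longrightarrow> clopen X B \<Longrightarrow> clopen X (A \<inter> B)"
  by (auto simp: clopen_def)
lemma clopen_Diff: "clopen X A \<Longrightarrow> clopen X B \<Longrightarrow> clopen X (A - B)"
  by (auto simp: clopen_def)
lemma clopen_topspace: "clopen X (topspace X)"
  by (auto simp: clopen_def)
lemma clopen_empty: "clopen X {}"
  by (auto simp: clopen_def)
lemma clopen_Union: "finite F \<Longrightarrow> (\<And>A. A \<in> F \<Longrightarrow> clopen X A) \<Longrightarrow> clopen X (\<Union>F)"
  by (induction F rule: finite_induct) (auto simp: clopen_empty clopen_Un)

lemma clopen_homeo_image:
  assumes "homeomorphic_map X Y f" "clopen X A"
  shows "clopen Y (f ` A)"
proof -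
  have "A \<subseteq> topspace X" using clopen_subset[OF assms(2)] .
  then show ?thesis
    using homeomorphic_map_openness[OF assms(1)] homeomorphic_map_closedness[OF assms(1)] assms(2)
    unfolding clopen_def by simp
qed

lemma cantor_top_split:
  assumes U: "clopen cantor_top U" "U \<noteq> {}"
  shows "\<exists>V. clopen cantor_top V \<and> V \<noteq> {} \<and> V \<subset> U"
proof -
  obtain p where p: "p \<in> U" using U by auto
  have "openin cantor_top U" using U by (simp add: clopen_def)
  then obtain W where W: "finite {i. W i \<noteq> (UNIV::bool set)}" "p \<in> Pi\<^sub>E UNIV W" "Pi\<^sub>E UNIV W \<subseteq> U"
    using p unfolding cantor_top_def openin_product_topology_alt by auto
  obtain m where "m \<notin> {i. W i \<noteq> (UNIV::bool set)}"
    using ex_new_if_finite[OF infinite_UNIV_nat W(1)] by blast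
  then have m: "W m = UNIV" by simp
  define V where "V = U \<inter> {x. x m = p m}"
  have cm: "continuous_map cantor_top (discrete_topology (UNIV::bool set)) (\<lambda>x. x m)"
    unfolding cantor_top_def by (rule continuous_map_product_projection) simp
  have "clopen cantor_top {x \<in> topspace cantor_top. x m \<in> {p m}}"
    unfolding clopen_def
    using openin_continuous_map_preimage[OF cm, of "{p m}"] closedin_continuous_map_preimage[OF cm, of "{p m}"]
    by auto
  moreover have "topspace cantor_top = UNIV"
    by (simp add: cantor_top_def)
  ultimately have "clopen cantor_top {x. x m = p m}" by simp
  then have cV: "clopen cantor_top V" using U by (simp add: V_def clopen_Int)
  have pV: "p \<in> V" using p by (simp add: V_def)
  have q: "p(m := \<not> p m) \<in> Pi\<^sub>E UNIV W"
  proof -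
    have "\<forall>i. p i \<in> W i" using W(2) by (simp add: PiE_UNIV_domain Pi_iff)
    then have "\<forall>i. (p(m := \<not> p m)) i \<in> W i" using m by simp
    then show ?thesis by (simp add: PiE_UNIV_domain Pi_iff)
  qed
  have qU: "p(m := \<not> p m) \<in> U" using q W(3) by blast
  have qV: "p(m := \<not> p m) \<notin> V" by (simp add: V_def)
  have VU: "V \<subseteq> U" by (simp add: V_def)
  have "V \<subset> U" using qU qV VU by blast
  then show ?thesis using cV pV by blast
qed

lemma cantor_split:
  assumes "cantor_space X" "clopen X U" "U \<noteq> {}"
  shows "\<exists>V. clopen X V \<and> V \<noteq> {} \<and> V \<subset> U"
proof -
  obtain f g where fg: "homeomorphic_maps X cantor_top f g"
    using assms(1) by (auto simp: cantor_space_def homeomorphic_space_def)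
  then have f: "homeomorphic_map X cantor_top f" and g: "homeomorphic_map cantor_top X g"
    using homeomorphic_maps_map by blast+
  have gf: "\<And>x. x \<in> topspace X \<Longrightarrow> g (f x) = x"
    using fg by (simp add: homeomorphic_maps_def)
  have c: "clopen cantor_top (f ` U)" by (rule clopen_homeo_image[OF f assms(2)])
  have ne: "f ` U \<noteq> {}" using assms(3) by simp
  obtain V where V: "clopen cantor_top V" "V \<noteq> {}" "V \<subset> f ` U"
    using cantor_top_split[OF c ne] by blast
  have US: "U \<subseteq> topspace X" using clopen_subset[OF assms(2)] .
  have "g ` V \<subseteq> U"
  proof
    fix y assume "y \<in> g ` V"
    then obtain v where "v \<in> V" "y = g v" by blast
    then obtain x where "x \<in> U" "v = f x" using V(3) by blast
    then show "y \<in> U" using gf US \<open>y = g v\<close> by auto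
  qed
  moreover have "g ` V \<noteq> U"
  proof
    assume e: "g ` V = U"
    obtain y where "y \<in> f ` U" "y \<notin> V" using V(3) by blast
    then obtain x where x: "x \<in> U" "y = f x" by blast
    then obtain v where v: "v \<in> V" "x = g v" using e by blast
    then obtain x' where x': "x' \<in> U" "v = f x'" using V(3) by blast
    then have "x = x'" using v gf US by auto
    then show False using x x' v \<open>y \<notin> V\<close> by simp
  qed
  ultimately have "g ` V \<subset> U" by blast
  then show ?thesis using clopen_homeo_image[OF g V(1)] V(2) by blast
qed



lemma grp:
  assumes "homeo_subgroup X G" "g \<in> G"
  shows "bij g" "inv g \<in> G" "\<And>x. g (inv g x) = x" "\<And>x. inv g (g x) = x"
    "homeomorphic_map X X g" "g ` topspace X = topspace X"
    "\<And>x. g x \<in> topspace X \<longleftrightarrow> x \<in> topspace X"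
    "\<And>A. clopen X A \<Longrightarrow> clopen X (g ` A)"
proof -
  obtain h where h: "h \<in> G" "g \<circ> h = id" "h \<circ> g = id"
    using assms unfolding homeo_subgroup_def by blast
  have ih: "inv g = h" using h inv_unique_comp by blast
  show b: "bij g" using h o_bij by blast
  show "inv g \<in> G" using ih h by simp
  show "\<And>x. g (inv g x) = x" using b by (simp add: bij_is_surj surj_f_inv_f)
  show "\<And>x. inv g (g x) = x" using b by (simp add: bij_is_inj inv_f_f)
  show hm: "homeomorphic_map X X g" using assms unfolding homeo_subgroup_def Homeo_def by auto
  show im: "g ` topspace X = topspace X" using homeomorphic_imp_surjective_map[OF hm] .
  show "\<And>x. g x \<in> topspace X \<longleftrightarrow> x \<in> topspace X"
  proof -
    fix x
    show "g x \<in> topspace X \<longleftrightarrow> x \<in> topspace X"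
      using im b by (metis bij_def image_iff inj_def)
  qed
  show "\<And>A. clopen X A \<Longrightarrow> clopen X (g ` A)" using clopen_homeo_image[OF hm] .
qed

lemma glue:
  assumes af: "approx_full X G"
    and fin: "finite I" and P: "\<forall>i\<in>I. clopen X (P i)" and E: "\<forall>i\<in>I. E i \<in> G"
    and dP: "\<forall>i\<in>I. \<forall>j\<in>I. i \<noteq> j \<longrightarrow> P i \<inter> P j = {}" and uP: "(\<Union>i\<in>I. P i) = topspace X"
    and dE: "\<forall>i\<in>I. \<forall>j\<in>I. i \<noteq> j \<longrightarrow> E i ` P i \<inter> E j ` P j = {}"
    and uE: "(\<Union>i\<in>I. E i ` P i) = topspace X"
    and i0: "i0 \<in> I" "P i0 \<noteq> {}"
  shows "\<exists>k\<in>G. \<forall>i\<in>I. E i \<noteq> E i0 \<longrightarrow> (\<forall>x\<in>P i. k x = E i x)"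
proof -
  define \<Lambda> where "\<Lambda> = E ` {i\<in>I. P i \<noteq> {}}"
  define D where "D e = (\<Union>i\<in>{i\<in>I. E i = e}. P i)" for e
  have "\<Lambda> \<subseteq> G" using E by (auto simp: \<Lambda>_def)
  moreover have "finite \<Lambda>" using fin by (simp add: \<Lambda>_def)
  moreover have "clopen_partition X \<Lambda> D (topspace X)"
    unfolding clopen_partition_def
  proof (intro conjI ballI impI)
    fix e assume "e \<in> \<Lambda>"
    have "clopen X (\<Union>(P ` {i\<in>I. E i = e}))"
      by (rule clopen_Union) (use fin P in auto)
    then show "clopen X (D e)" by (simp add: D_def)
    show "D e \<noteq> {}" using \<open>e \<in> \<Lambda>\<close> by (auto simp: \<Lambda>_def D_def)
  next
    fix e e' assume "e \<in> \<Lambda>" "e' \<in> \<Lambda>" "e \<noteq> e'"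
    show "D e \<inter> D e' = {}"
    proof (rule ccontr)
      assume "D e \<inter> D e' \<noteq> {}"
      then obtain a where "a \<in> D e" "a \<in> D e'" by auto
      then obtain i j where ij: "i \<in> I" "E i = e" "a \<in> P i" "j \<in> I" "E j = e'" "a \<in> P j"
        unfolding D_def by blast
      then have "i \<noteq> j" using \<open>e \<noteq> e'\<close> by auto
      then show False using dP ij by blast
    qed
  next
    show "(\<Union>e\<in>\<Lambda>. D e) = topspace X"
      unfolding D_def \<Lambda>_def using uP by blast
  qed
  moreover have "set_partition \<Lambda> (\<lambda>g. g ` D g) (topspace X)"
    unfolding set_partition_def
  proof (intro conjI ballI impI)
    fix e assume "e \<in> \<Lambda>"
    then show "e ` D e \<noteq> {}" by (auto simp: \<Lambda>_def D_def)
  next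
    fix e e' assume "e \<in> \<Lambda>" "e' \<in> \<Lambda>" "e \<noteq> e'"
    show "e ` D e \<inter> e' ` D e' = {}"
    proof (rule ccontr)
      assume "e ` D e \<inter> e' ` D e' \<noteq> {}"
      then obtain a b where ab: "a \<in> D e" "b \<in> D e'" "e a = e' b" by auto
      then obtain i j where ij: "i \<in> I" "E i = e" "a \<in> P i" "j \<in> I" "E j = e'" "b \<in> P j"
        unfolding D_def by blast
      then have "i \<noteq> j" using \<open>e \<noteq> e'\<close> by auto
      then have "E i ` P i \<inter> E j ` P j = {}" using dE ij by blast
      moreover have "e a \<in> E i ` P i" "e' b \<in> E j ` P j" using ij by auto
      ultimately show False using ab(3) by auto
    qed
  next
    show "(\<Union>e\<in>\<Lambda>. e ` D e) = topspace X"
    proof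
      show "(\<Union>e\<in>\<Lambda>. e ` D e) \<subseteq> topspace X"
      proof
        fix y assume "y \<in> (\<Union>e\<in>\<Lambda>. e ` D e)"
        then obtain e a where "a \<in> D e" "y = e a" by blast
        then obtain i where "i \<in> I" "E i = e" "a \<in> P i" unfolding D_def by blast
        then have "y \<in> (\<Union>i\<in>I. E i ` P i)" using \<open>y = e a\<close> by blast
        then show "y \<in> topspace X" using uE by simp
      qed
      show "topspace X \<subseteq> (\<Union>e\<in>\<Lambda>. e ` D e)"
      proof
        fix y assume "y \<in> topspace X"
        then obtain i a where i: "i \<in> I" "a \<in> P i" "y = E i a" using uE by blast
        then have "E i \<in> \<Lambda>" unfolding \<Lambda>_def by blast
        moreover have "a \<in> D (E i)" unfolding D_def using i by blast
        ultimately show "y \<in> (\<Union>e\<in>\<Lambda>. e ` D e)" using i by blast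
      qed
    qed
  qed
  moreover have "E i0 \<in> \<Lambda>" using i0 by (auto simp: \<Lambda>_def)
  ultimately obtain k where k: "k \<in> G" "\<forall>g\<in>\<Lambda> - {E i0}. \<forall>x\<in>D g. k x = g x"
    using af unfolding approx_full_def by blast
  show ?thesis
  proof (intro bexI[OF _ k(1)] ballI impI)
    fix i x assume "i \<in> I" "E i \<noteq> E i0" "x \<in> P i"
    then have "E i \<in> \<Lambda> - {E i0}" "x \<in> D (E i)" by (auto simp: \<Lambda>_def D_def)
    then show "k x = E i x" using k(2) by blast
  qed
qed



lemma cantor_many:
  fixes n :: nat
  assumes "cantor_space X" "clopen X U" "U \<noteq> {}"
  shows "\<exists>B. (\<forall>i<n. clopen X (B i) \<and> B i \<noteq> {} \<and> B i \<subseteq> U) \<and>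
             (\<forall>i<n. \<forall>j<n. i \<noteq> j \<longrightarrow> B i \<inter> B j = {})"
proof -
  have "\<exists>B. (\<forall>i<n. clopen X (B i) \<and> B i \<noteq> {} \<and> B i \<subseteq> U) \<and>
             (\<forall>i<n. \<forall>j<n. i \<noteq> j \<longrightarrow> B i \<inter> B j = {}) \<and>
             clopen X (U - (\<Union>i<n. B i)) \<and> U - (\<Union>i<n. B i) \<noteq> {}"
  proof (induction n)
    case 0
    then show ?case using assms by auto
  next
    case (Suc n)
    then obtain B where B: "\<forall>i<n. clopen X (B i) \<and> B i \<noteq> {} \<and> B i \<subseteq> U"
      "\<forall>i<n. \<forall>j<n. i \<noteq> j \<longrightarrow> B i \<inter> B j = {}"
      "clopen X (U - (\<Union>i<n. B i))" "U - (\<Union>i<n. B i) \<noteq> {}" by blast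
    define W where "W = U - (\<Union>i<n. B i)"
    obtain V where V: "clopen X V" "V \<noteq> {}" "V \<subset> W"
      using cantor_split[OF assms(1) B(3)] B(4) unfolding W_def by blast
    define B' where "B' = B(n := V)"
    have e: "(\<Union>i<Suc n. B' i) = (\<Union>i<n. B i) \<union> V"
      by (auto simp: B'_def lessThan_Suc)
    show ?case
    proof (rule exI[of _ B'], intro conjI allI impI)
      fix i assume "i < Suc n"
      then show "clopen X (B' i)" "B' i \<noteq> {}" "B' i \<subseteq> U"
        using B V W_def by (auto simp: B'_def less_Suc_eq)
    next
      fix i j assume "i < Suc n" "j < Suc n" "i \<noteq> j"
      show "B' i \<inter> B' j = {}"
      proof (cases "i = n \<or> j = n")
        case True
        then show ?thesis using \<open>i \<noteq> j\<close> \<open>i < Suc n\<close> \<open>j < Suc n\<close> V(3) B(1)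
          unfolding W_def B'_def by (auto simp: less_Suc_eq)
      next
        case False
        then have "i < n" "j < n" using \<open>i < Suc n\<close> \<open>j < Suc n\<close> by auto
        then show ?thesis using B(2) \<open>i \<noteq> j\<close> False unfolding B'_def by simp
      qed
    next
      show "clopen X (U - (\<Union>i<Suc n. B' i))"
      proof -
        have "U - ((\<Union>i<n. B i) \<union> V) = W - V" unfolding W_def by blast
        then show ?thesis unfolding e using clopen_Diff[OF B(3) V(1)] W_def by simp
      qed
      show "U - (\<Union>i<Suc n. B' i) \<noteq> {}"
        unfolding e using V(3) W_def by blast
    qed
  qed
  then show ?thesis by blast
qed

lemma converse:
  assumes G: "homeo_subgroup X G" and s: "strongly_approx_full X G"
  shows "approx_full X G"
  unfolding approx_full_def
proof (intro allI impI)
  fix \<Gamma> D \<delta>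
  assume h: "\<Gamma> \<subseteq> G \<and> finite \<Gamma> \<and> clopen_partition X \<Gamma> D (topspace X) \<and>
        set_partition \<Gamma> (\<lambda>g. g ` D g) (topspace X) \<and> \<delta> \<in> \<Gamma>"
  then have sub: "\<Gamma> \<subseteq> G" and fin: "finite \<Gamma>" and cp: "clopen_partition X \<Gamma> D (topspace X)"
    and sp: "set_partition \<Gamma> (\<lambda>g. g ` D g) (topspace X)" and d: "\<delta> \<in> \<Gamma>" by auto
  show "\<exists>k\<in>G. \<forall>g\<in>\<Gamma> - {\<delta>}. \<forall>x\<in>D g. k x = g x"
  proof (cases "\<Gamma> - {\<delta>} = {}")
    case True
    then show ?thesis using G unfolding homeo_subgroup_def by auto
  next
    case False
    then obtain g0 where g0: "g0 \<in> \<Gamma>" "g0 \<noteq> \<delta>" by auto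
    define Dom where "Dom = topspace X - D \<delta>"
    define R where "R = topspace X - \<delta> ` D \<delta>"
    have cD: "\<And>g. g \<in> \<Gamma> \<Longrightarrow> clopen X (D g) \<and> D g \<noteq> {}"
      and dD: "\<And>g g'. g \<in> \<Gamma> \<Longrightarrow> g' \<in> \<Gamma> \<Longrightarrow> g \<noteq> g' \<Longrightarrow> D g \<inter> D g' = {}"
      and uD: "(\<Union>g\<in>\<Gamma>. D g) = topspace X"
      using cp unfolding clopen_partition_def by auto
    have nI: "\<And>g. g \<in> \<Gamma> \<Longrightarrow> g ` D g \<noteq> {}"
      and dI: "\<And>g g'. g \<in> \<Gamma> \<Longrightarrow> g' \<in> \<Gamma> \<Longrightarrow> g \<noteq> g' \<Longrightarrow> g ` D g \<inter> g' ` D g' = {}"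
      and uI: "(\<Union>g\<in>\<Gamma>. g ` D g) = topspace X"
      using sp unfolding set_partition_def by auto
    have cd: "clopen X (\<delta> ` D \<delta>)" using grp(8)[OF G] sub d cD by blast
    have KD: "Dom \<in> Kset X"
      unfolding Kset_def Dom_def using cD[OF d] cD[OF g0(1)] dD[OF g0(1) d g0(2)]
        clopen_subset[of X "D g0"] clopen_subset[of X "D \<delta>"]
      by (auto intro!: clopen_Diff clopen_topspace)
    have g0I: "g0 ` D g0 \<subseteq> topspace X" "\<delta> ` D \<delta> \<subseteq> topspace X" using uI g0(1) d by blast+
    have "g0 ` D g0 \<subseteq> R" using g0I dI[OF g0(1) d g0(2)] unfolding R_def by blast
    then have Rne: "R \<noteq> {}" using nI[OF g0(1)] by blast
    have Rp: "R \<subset> topspace X" using nI[OF d] g0I unfolding R_def by blast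
    have KR: "R \<in> Kset X"
      unfolding Kset_def using Rne Rp clopen_Diff[OF clopen_topspace cd] unfolding R_def by blast
    have "clopen_partition X (\<Gamma> - {\<delta>}) D Dom"
      unfolding clopen_partition_def Dom_def using cD dD uD d by auto
    moreover have "set_partition (\<Gamma> - {\<delta>}) (\<lambda>g. g ` D g) R"
      unfolding set_partition_def
    proof (intro conjI)
      show "\<forall>i\<in>\<Gamma> - {\<delta>}. i ` D i \<noteq> {}" using nI by blast
      show "\<forall>i\<in>\<Gamma> - {\<delta>}. \<forall>j\<in>\<Gamma> - {\<delta>}. i \<noteq> j \<longrightarrow> i ` D i \<inter> j ` D j = {}"
        using dI by blast
      show "(\<Union>i\<in>\<Gamma> - {\<delta>}. i ` D i) = R"
      proof
        show "(\<Union>i\<in>\<Gamma> - {\<delta>}. i ` D i) \<subseteq> R"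
        proof
          fix y assume "y \<in> (\<Union>i\<in>\<Gamma> - {\<delta>}. i ` D i)"
          then obtain g where g: "g \<in> \<Gamma>" "g \<noteq> \<delta>" "y \<in> g ` D g" by blast
          then have "y \<in> topspace X" using uI by blast
          moreover have "y \<notin> \<delta> ` D \<delta>" using dI[OF g(1) d g(2)] g(3) by blast
          ultimately show "y \<in> R" unfolding R_def by blast
        qed
        show "R \<subseteq> (\<Union>i\<in>\<Gamma> - {\<delta>}. i ` D i)"
        proof
          fix y assume "y \<in> R"
          then have "y \<in> topspace X" "y \<notin> \<delta> ` D \<delta>" unfolding R_def by auto
          then obtain g where "g \<in> \<Gamma>" "y \<in> g ` D g" using uI by blast
          then show "y \<in> (\<Union>i\<in>\<Gamma> - {\<delta>}. i ` D i)" using \<open>y \<notin> \<delta> ` D \<delta>\<close> by blast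
        qed
      qed
    qed
    moreover have "\<Gamma> - {\<delta>} \<subseteq> G" "finite (\<Gamma> - {\<delta>})" using sub fin by auto
    ultimately show ?thesis using s KD KR unfolding strongly_approx_full_def by blast
  qed
qed



lemma vig:
  assumes "vigorous X G" "clopen X A" "clopen X B" "clopen X C" "B \<noteq> {}" "C \<noteq> {}" "B \<subset> A" "C \<subset> A"
  shows "\<exists>g\<in>G. supp X g \<subseteq> A \<and> g ` B \<subseteq> C"
proof -
  have "\<forall>A B C. clopen X A \<and> clopen X B \<and> clopen X C \<and> B \<noteq> {} \<and> C \<noteq> {} \<and> B \<subset> A \<and> C \<subset> A \<longrightarrow>
        (\<exists>g\<in>G. supp X g \<subseteq> A \<and> g ` B \<subseteq> C)" using assms(1) unfolding vigorous_def .
  then have "clopen X A \<and> clopen X B \<and> clopen X C \<and> B \<noteq> {} \<and> C \<noteq> {} \<and> B \<subset> A \<and> C \<subset> A \<longrightarrow>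
        (\<exists>g\<in>G. supp X g \<subseteq> A \<and> g ` B \<subseteq> C)" by blast
  then show ?thesis using assms(2-) by blast
qed

lemma forward:
  assumes cs: "cantor_space X" and G: "homeo_subgroup X G" and vg: "vigorous X G"
    and af: "approx_full X G"
  shows "strongly_approx_full X G"
  unfolding strongly_approx_full_def
proof (intro allI impI)
  fix Dom R \<Gamma> D
  assume h: "Dom \<in> Kset X \<and> R \<in> Kset X \<and> \<Gamma> \<subseteq> G \<and> finite \<Gamma> \<and>
        clopen_partition X \<Gamma> D Dom \<and> set_partition \<Gamma> (\<lambda>g. g ` D g) R"
  define T where "T = topspace X"
  have KD: "clopen X Dom" "Dom \<noteq> {}" "Dom \<subset> T" and KR: "clopen X R" "R \<noteq> {}" "R \<subset> T"
    using h unfolding Kset_def T_def by auto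
  have sub: "\<Gamma> \<subseteq> G" and fin: "finite \<Gamma>" using h by auto
  have cD: "\<And>g. g \<in> \<Gamma> \<Longrightarrow> clopen X (D g) \<and> D g \<noteq> {}"
    and dD: "\<And>g g'. g \<in> \<Gamma> \<Longrightarrow> g' \<in> \<Gamma> \<Longrightarrow> g \<noteq> g' \<Longrightarrow> D g \<inter> D g' = {}"
    and uD: "(\<Union>g\<in>\<Gamma>. D g) = Dom"
    using h unfolding clopen_partition_def by auto
  have dI: "\<And>g g'. g \<in> \<Gamma> \<Longrightarrow> g' \<in> \<Gamma> \<Longrightarrow> g \<noteq> g' \<Longrightarrow> g ` D g \<inter> g' ` D g' = {}"
    and uI: "(\<Union>g\<in>\<Gamma>. g ` D g) = R"
    using h unfolding set_partition_def by auto
  define B where "B = T - R"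
  have cT: "clopen X T" unfolding T_def by (rule clopen_topspace)
  have cB: "clopen X B" "B \<noteq> {}" using KR cT by (auto simp: B_def intro: clopen_Diff)
  obtain Q where Q: "clopen X Q" "Q \<noteq> {}" "Q \<subset> R" using cantor_split[OF cs KR(1,2)] by blast
  have "Q \<subset> T" using Q(3) KR(3) by blast
  then have "\<exists>u\<in>G. supp X u \<subseteq> T \<and> u ` Dom \<subseteq> Q"
    using vig[OF vg cT KD(1) Q(1) KD(2) Q(2) KD(3)] by blast
  then obtain u where u: "u \<in> G" "u ` Dom \<subseteq> Q" by blast
  note uu = grp[OF G u(1)]
  define N where "N = Suc (card \<Gamma>)"
  obtain Bs where Bs: "\<forall>i<N. clopen X (Bs i) \<and> Bs i \<noteq> {} \<and> Bs i \<subseteq> B"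
    "\<forall>i<N. \<forall>j<N. i \<noteq> j \<longrightarrow> Bs i \<inter> Bs j = {}"
    using cantor_many[OF cs cB] by blast
  have ex: "\<exists>\<tau>. \<tau> \<in> G \<and> \<tau> ` R \<subseteq> Bs i" if "i < N" for i
  proof -
    have "Bs i \<subset> T" using Bs(1) that KR by (auto simp: B_def)
    then show ?thesis using vig[OF vg cT KR(1), of "Bs i"] KR Bs(1) that by blast
  qed
  define tf where "tf i = (SOME \<tau>. \<tau> \<in> G \<and> \<tau> ` R \<subseteq> Bs i)" for i
  have tf: "tf i \<in> G \<and> tf i ` R \<subseteq> Bs i" if "i < N" for i
    unfolding tf_def using someI_ex[OF ex[OF that]] .
  have "\<exists>i<N. tf i \<circ> u \<notin> \<Gamma>"
  proof (rule ccontr)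
    assume "\<not> ?thesis"
    then have s: "(\<lambda>i. tf i \<circ> u) ` {..<N} \<subseteq> \<Gamma>" by auto
    have "inj_on (\<lambda>i. tf i \<circ> u) {..<N}"
    proof (rule inj_onI)
      fix i j assume ij: "i \<in> {..<N}" "j \<in> {..<N}" "tf i \<circ> u = tf j \<circ> u"
      have "tf i x = tf j x" for x using fun_cong[OF ij(3), of "inv u x"] uu(3) by simp
      then have "tf i = tf j" by (rule ext)
      moreover obtain r where "r \<in> R" using KR by auto
      ultimately have "tf i r \<in> Bs i \<inter> Bs j" using tf[of i] tf[of j] ij by (metis IntI image_subset_iff lessThan_iff)
      then show "i = j" using Bs(2) ij by auto
    qed
    then have "card ((\<lambda>i. tf i \<circ> u) ` {..<N}) = N" by (simp add: card_image)
    then have "N \<le> card \<Gamma>" using card_mono[OF fin s] by simp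
    then show False by (simp add: N_def)
  qed
  then obtain i where "i < N" "tf i \<circ> u \<notin> \<Gamma>" by blast
  then obtain \<tau> where t: "\<tau> \<in> G" "\<tau> ` R \<subseteq> B" "\<tau> \<circ> u \<notin> \<Gamma>"
    using tf Bs(1) by blast
  note tt = grp[OF G t(1)]

  have injU: "inj u" and injT: "inj \<tau>" using uu(1) tt(1) bij_is_inj by auto
  have Dsub: "\<And>g. g \<in> \<Gamma> \<Longrightarrow> D g \<subseteq> Dom" using uD by blast
  have Isub: "\<And>g. g \<in> \<Gamma> \<Longrightarrow> g ` D g \<subseteq> R" using uI by blast
  have uDR: "u ` Dom \<subseteq> R" using u(2) Q(3) by blast
  have RT: "R \<subseteq> T" "Dom \<subseteq> T" using KR KD by auto
  have RB: "R \<inter> B = {}" "R \<union> B = T" using RT by (auto simp: B_def)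
  define I where "I = (\<Gamma> \<times> {0::nat}) \<union> (\<Gamma> \<times> {1}) \<union> {(id, 2), (id, 3)}"
  define Qs where "Qs = (\<lambda>(g, n::nat). if n = 0 then u ` D g else if n = 1 then \<tau> ` g ` D g
     else if n = 2 then R - u ` Dom else B - \<tau> ` R)"
  define P where "P i = inv u ` Qs i" for i
  define E where "E = (\<lambda>(g, n::nat). if n = 0 then g else if n = 1 then \<tau> \<circ> u \<circ> inv g \<circ> inv \<tau> \<circ> u
     else if n = 2 then \<tau> \<circ> u else u)"
  define Z where "Z = (\<lambda>(g, n::nat). if n = 0 then g ` D g else if n = 1 then \<tau> ` u ` D g
     else if n = 2 then \<tau> ` (R - u ` Dom) else B - \<tau> ` R)"
  have P0: "P (g, 0) = D g" for g
    by (simp add: P_def Qs_def image_comp uu(4))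
  have EZ: "E i ` P i = Z i" if "i \<in> I" for i
  proof -
    obtain g n where i: "i = (g, n)" by fastforce
    show ?thesis
    proof (cases "n = 1")
      case True
      then have g: "g \<in> \<Gamma>" using that i by (auto simp: I_def)
      note gg = grp[OF G subsetD[OF sub g]]
      show ?thesis using True
        by (simp add: i E_def P_def Qs_def Z_def image_comp o_def uu(3) tt(4) gg(4))
    next
      case False
      then show ?thesis
        by (simp add: i E_def P_def Qs_def Z_def image_comp o_def uu(3) uu(4))
    qed
  qed
  have fI: "finite I" using fin by (simp add: I_def)
  have injI: "inj (inv u)" using uu(1) by (simp add: bij_imp_bij_inv bij_is_inj)
  have PQ: "P i \<inter> P j = inv u ` (Qs i \<inter> Qs j)" for i j
    unfolding P_def by (simp add: image_Int[OF injI])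
  have Icases: "\<And>i. i \<in> I \<Longrightarrow> (\<exists>g\<in>\<Gamma>. i = (g, 0)) \<or> (\<exists>g\<in>\<Gamma>. i = (g, 1)) \<or> i = (id, 2) \<or> i = (id, 3)"
    unfolding I_def by blast
  define Rg where "Rg n = (if n = (0::nat) then u ` Dom else if n = 1 then \<tau> ` R else if n = 2 then R - u ` Dom else B - \<tau> ` R)" for n
  have Rgd: "Rg n \<inter> Rg m = {}" if "n \<noteq> m" "n < 4" "m < 4" for n m
  proof -
    have "u ` Dom \<inter> \<tau> ` R = {}" "u ` Dom \<inter> (R - u ` Dom) = {}" "u ` Dom \<inter> (B - \<tau> ` R) = {}"
      "\<tau> ` R \<inter> (R - u ` Dom) = {}" "\<tau> ` R \<inter> (B - \<tau> ` R) = {}" "(R - u ` Dom) \<inter> (B - \<tau> ` R) = {}"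
      using uDR t(2) RB by blast+
    then show ?thesis using that unfolding Rg_def
      by (cases n; cases m) (auto simp: Int_commute eval_nat_numeral less_Suc_eq)
  qed
  have QsRg: "Qs i \<subseteq> Rg (snd i) \<and> snd i < 4" if "i \<in> I" for i
    using Icases[OF that] Dsub Isub unfolding Rg_def Qs_def by (auto; blast)
  define Zg where "Zg n = (if n = (0::nat) then R else if n = 1 then \<tau> ` u ` Dom else if n = 2 then \<tau> ` (R - u ` Dom) else B - \<tau> ` R)" for n
  have Zgd: "Zg n \<inter> Zg m = {}" if "n \<noteq> m" "n < 4" "m < 4" for n m
  proof -
    have a: "\<tau> ` u ` Dom \<inter> \<tau> ` (R - u ` Dom) = {}"
      by (simp add: image_Int[OF injT, symmetric])
    have "R \<inter> \<tau> ` u ` Dom = {}" "R \<inter> \<tau> ` (R - u ` Dom) = {}" "R \<inter> (B - \<tau> ` R) = {}"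
      "\<tau> ` u ` Dom \<inter> (B - \<tau> ` R) = {}" "\<tau> ` (R - u ` Dom) \<inter> (B - \<tau> ` R) = {}"
      using uDR t(2) RB by blast+
    then show ?thesis using that a unfolding Zg_def
      by (cases n; cases m) (auto simp: Int_commute eval_nat_numeral less_Suc_eq)
  qed
  have ZRg: "Z i \<subseteq> Zg (snd i) \<and> snd i < 4" if "i \<in> I" for i
    using Icases[OF that] Dsub Isub unfolding Zg_def Z_def by (auto; blast)
  have key: "\<exists>k\<in>G. \<forall>i\<in>I. E i \<noteq> E (id, 2) \<longrightarrow> (\<forall>x\<in>P i. k x = E i x)"
  proof (rule glue[OF af fI])
    show "\<forall>i\<in>I. clopen X (P i)"
    proof
      fix i assume "i \<in> I"
      then consider g where "g \<in> \<Gamma>" "i = (g, 0)" | g where "g \<in> \<Gamma>" "i = (g, 1)"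
        | "i = (id, 2)" | "i = (id, 3)" using Icases by blast
      then show "clopen X (P i)"
      proof cases
        case 1 then show ?thesis using cD P0 by simp
      next
        case 2
        note gg = grp[OF G subsetD[OF sub 2(1)]]
        show ?thesis unfolding 2 P_def Qs_def
          using grp(8)[OF G uu(2)] gg(8) tt(8) cD[OF 2(1)] by simp
      next
        case 3
        show ?thesis unfolding 3 P_def Qs_def
          using grp(8)[OF G uu(2)] clopen_Diff[OF KR(1) uu(8)[OF KD(1)]] by simp
      next
        case 4
        show ?thesis unfolding 4 P_def Qs_def
          using grp(8)[OF G uu(2)] clopen_Diff[OF cB(1) tt(8)[OF KR(1)]] by simp
      qed
    qed
    show "\<forall>i\<in>I. E i \<in> G"
    proof
      fix i assume "i \<in> I"
      then consider g where "g \<in> \<Gamma>" "i = (g, 0)" | g where "g \<in> \<Gamma>" "i = (g, 1)"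
        | "i = (id, 2)" | "i = (id, 3)" using Icases by blast
      then show "E i \<in> G"
      proof cases
        case 1 then show ?thesis using sub by (auto simp: E_def)
      next
        case 2
        note gg = grp[OF G subsetD[OF sub 2(1)]]
        have c: "\<And>f g. f \<in> G \<Longrightarrow> g \<in> G \<Longrightarrow> f \<circ> g \<in> G" using G unfolding homeo_subgroup_def by blast
        show ?thesis unfolding 2 E_def using c t(1) u(1) gg(2) tt(2) by simp
      next
        case 3
        have c: "\<And>f g. f \<in> G \<Longrightarrow> g \<in> G \<Longrightarrow> f \<circ> g \<in> G" using G unfolding homeo_subgroup_def by blast
        show ?thesis unfolding 3 E_def using c t(1) u(1) by simp
      next
        case 4 then show ?thesis using u(1) by (simp add: E_def)
      qed
    qed
    show "\<forall>i\<in>I. \<forall>j\<in>I. i \<noteq> j \<longrightarrow> P i \<inter> P j = {}"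
    proof (intro ballI impI)
      fix i j assume ij: "i \<in> I" "j \<in> I" "i \<noteq> j"
      have "Qs i \<inter> Qs j = {}"
      proof (cases "snd i = snd j")
        case False
        then show ?thesis using QsRg[OF ij(1)] QsRg[OF ij(2)] Rgd[of "snd i" "snd j"] by blast
      next
        case True
        from Icases[OF ij(1)] Icases[OF ij(2)] True ij(3)
        consider g g' where "g \<in> \<Gamma>" "g' \<in> \<Gamma>" "g \<noteq> g'" "i = (g, 0)" "j = (g', 0)"
          | g g' where "g \<in> \<Gamma>" "g' \<in> \<Gamma>" "g \<noteq> g'" "i = (g, 1)" "j = (g', 1)"
          by auto
        then show ?thesis
        proof cases
          case 1 then show ?thesis using dD[of g g']
            by (simp add: Qs_def image_Int[OF injU, symmetric])
        next
          case 2 then show ?thesis using dI[of g g']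
            by (simp add: Qs_def image_Int[OF injT, symmetric])
        qed
      qed
      then show "P i \<inter> P j = {}" using PQ by simp
    qed
    show "(\<Union>i\<in>I. P i) = topspace X"
    proof -
      have e1: "(\<Union>i\<in>\<Gamma> \<times> {0}. Qs i) = u ` Dom" unfolding Qs_def uD[symmetric] by (auto; blast)
      have e2: "(\<Union>i\<in>\<Gamma> \<times> {1}. Qs i) = \<tau> ` R" unfolding Qs_def uI[symmetric] by (auto; blast)
      have "(\<Union>i\<in>I. Qs i) = u ` Dom \<union> \<tau> ` R \<union> (R - u ` Dom) \<union> (B - \<tau> ` R)"
        unfolding I_def UN_Un e1 e2 by (simp add: Qs_def Un_assoc)
      also have "\<dots> = T" using uDR t(2) RB by blast
      finally have "(\<Union>i\<in>I. P i) = inv u ` T" unfolding P_def by (simp add: image_UN[symmetric])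
      also have "inv u ` T = inv u ` u ` T" using uu(6) by (simp add: T_def)
      also have "\<dots> = T" by (simp add: image_comp comp_def uu(4))
      finally show ?thesis by (simp add: T_def)
    qed
    show "\<forall>i\<in>I. \<forall>j\<in>I. i \<noteq> j \<longrightarrow> E i ` P i \<inter> E j ` P j = {}"
    proof (intro ballI impI)
      fix i j assume ij: "i \<in> I" "j \<in> I" "i \<noteq> j"
      have "Z i \<inter> Z j = {}"
      proof (cases "snd i = snd j")
        case False
        then show ?thesis using ZRg[OF ij(1)] ZRg[OF ij(2)] Zgd[of "snd i" "snd j"] by blast
      next
        case True
        from Icases[OF ij(1)] Icases[OF ij(2)] True ij(3)
        consider g g' where "g \<in> \<Gamma>" "g' \<in> \<Gamma>" "g \<noteq> g'" "i = (g, 0)" "j = (g', 0)"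
          | g g' where "g \<in> \<Gamma>" "g' \<in> \<Gamma>" "g \<noteq> g'" "i = (g, 1)" "j = (g', 1)"
          by auto
        then show ?thesis
        proof cases
          case 1 then show ?thesis using dI[of g g'] by (simp add: Z_def)
        next
          case 2 then show ?thesis using dD[of g g']
            by (simp add: Z_def image_Int[OF injU, symmetric] image_Int[OF injT, symmetric])
        qed
      qed
      then show "E i ` P i \<inter> E j ` P j = {}" using EZ ij by simp
    qed
    show "(\<Union>i\<in>I. E i ` P i) = topspace X"
    proof -
      have e1: "(\<Union>i\<in>\<Gamma> \<times> {0}. Z i) = R" unfolding Z_def uI[symmetric] by (auto; blast)
      have e2: "(\<Union>i\<in>\<Gamma> \<times> {1}. Z i) = \<tau> ` u ` Dom" unfolding Z_def uD[symmetric] by (auto; blast)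
      have "(\<Union>i\<in>I. E i ` P i) = (\<Union>i\<in>I. Z i)" using EZ by simp
      also have "\<dots> = R \<union> \<tau> ` u ` Dom \<union> \<tau> ` (R - u ` Dom) \<union> (B - \<tau> ` R)"
        unfolding I_def UN_Un e1 e2 by (simp add: Z_def Un_assoc)
      also have "\<dots> = T" using uDR t(2) RB by blast
      finally show ?thesis by (simp add: T_def)
    qed
    show "(id, 2) \<in> I" by (simp add: I_def)
    show "P (id, 2) \<noteq> {}" using Q(3) u(2) by (auto simp: P_def Qs_def)
  qed
  then obtain k where k: "k \<in> G" "\<forall>i\<in>I. E i \<noteq> E (id, 2) \<longrightarrow> (\<forall>x\<in>P i. k x = E i x)" by blast
  show "\<exists>k\<in>G. \<forall>g\<in>\<Gamma>. \<forall>x\<in>D g. k x = g x"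
  proof (intro bexI[OF _ k(1)] ballI)
    fix g x assume g: "g \<in> \<Gamma>" and x: "x \<in> D g"
    have "(g, 0) \<in> I" "E (g, 0) \<noteq> E (id, 2)" using g t(3) by (auto simp: I_def E_def)
    then show "k x = g x" using k(2) x P0 by (auto simp: E_def)
  qed
qed


theorem corollary2p13:
  fixes X :: "'a topology" and G :: "('a \<Rightarrow> 'a) set"
  assumes "cantor_space X"
    and "homeo_subgroup X G"
    and "vigorous X G"
  shows "(approx_full X G \<longrightarrow> strongly_approx_full X G) \<and>
         (approx_full X G \<longleftrightarrow> strongly_approx_full X G)"
  using forward[OF assms] converse[OF assms(2)] by blast

end
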